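(* Let $N\ge 3$, $\alpha\in\mathbb{C}^N$, and let $i,j,q\in\{1,\dots,N\}$ be distinct. If $u$ is holomorphic on $\Omega'$ and $M_{i,j}(\alpha)u=M_{i,q}(\alpha)u=M_{j,q}(\alpha)u=0$, then $v=L_{i,j}(\alpha)u$ satisfies $M_{i,j}(\alpha+e_i-e_j)v=M_{i,q}(\alpha+e_i-e_j)v=M_{j,q}(\alpha+e_i-e_j)v=0$.
   Context: $x=(x_1,\dots,x_N)$, $\partial_p=\partial/\partial x_p$, $e_p$ the $p$-th standard unit vector of $\mathbb{C}^N$. For $\beta\in\mathbb{C}^N$ and $p\ne q$: $M_{p,q}(\beta)=\partial_p\partial_q+\frac{\beta_q}{x_p-x_q}\partial_p+\frac{\beta_p}{x_q-x_p}\partial_q$ and $L_{p,q}(\beta)=(x_p-x_q)\partial_q+\beta_q$. $\Omega'$ is a simply connected domain in $\{x\in\mathbb{C}^N:x_a\ne x_b\ \forall a\ne b\}$. *)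

theory Defs
  imports "HOL-Analysis.Analysis"
begin

text \<open>Points of C^N are vectors complex^'n, the index type 'n having N = CARD('n) elements.\<close>

definition holo_on :: "(complex^'n \<Rightarrow> complex) \<Rightarrow> (complex^'n) set \<Rightarrow> bool" where
  "holo_on u S \<longleftrightarrow> (\<forall>x\<in>S. \<exists>D. (u has_derivative D) (at x) \<and>
       (\<forall>(c::complex) w. D (c *s w) = c * D w))"

definition pd :: "'n \<Rightarrow> (complex^'n \<Rightarrow> complex) \<Rightarrow> complex^'n \<Rightarrow> complex" where
  "pd p f x = deriv (\<lambda>z. f (\<chi> k. if k = p then z else x $ k)) (x $ p)"

definition unitv :: "'n \<Rightarrow> complex^'n" where
  "unitv p = axis p 1"

definition Mop :: "complex^'n \<Rightarrow> 'n \<Rightarrow> 'n \<Rightarrow> (complex^'n \<Rightarrow> complex) \<Rightarrow> complex^'n \<Rightarrow> complex" where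
  "Mop \<beta> p q u x = pd p (pd q u) x + \<beta> $ q / (x $ p - x $ q) * pd p u x
                    + \<beta> $ p / (x $ q - x $ p) * pd q u x"

definition Lop :: "complex^'n \<Rightarrow> 'n \<Rightarrow> 'n \<Rightarrow> (complex^'n \<Rightarrow> complex) \<Rightarrow> complex^'n \<Rightarrow> complex" where
  "Lop \<beta> p q u x = (x $ p - x $ q) * pd q u x + \<beta> $ q * u x"

end

theory Submission
  imports Defs "HOL-Complex_Analysis.Cauchy_Integral_Formula"
begin

definition upd :: "complex^'n \<Rightarrow> 'n \<Rightarrow> complex \<Rightarrow> complex^'n" where
  "upd x p w = (\<chi> k. if k = p then w else x$k)"

definition Ax :: "'n \<Rightarrow> complex \<Rightarrow> complex^'n" where
  "Ax p h = (\<chi> k. if k = p then h else 0)"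

lemma upd_nth[simp]: "upd x p w $ k = (if k = p then w else x$k)" by (simp add: upd_def)
lemma upd_same[simp]: "upd x p (x$p) = x" by (simp add: vec_eq_iff)
lemma upd_upd_same[simp]: "upd (upd x p w) p z = upd x p z" by (simp add: vec_eq_iff)
lemma upd_swap: "k \<noteq> p \<Longrightarrow> upd (upd x p w) k z = upd (upd x k z) p w" unfolding vec_eq_iff by auto
lemma pd_upd: "pd p f x = deriv (\<lambda>z. f (upd x p z)) (x$p)" by (simp add: pd_def upd_def)
lemma upd_Ax: "upd x p w = x + Ax p (w - x$p)" by (simp add: vec_eq_iff Ax_def)

lemma norm_Ax: "norm (Ax p h) \<le> norm h"
proof -
  have "norm (Ax p h) = L2_set (\<lambda>i. norm (Ax p h $ i)) UNIV" by (simp add: norm_vec_def)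
  also have "\<dots> \<le> (\<Sum>i\<in>UNIV. norm (Ax p h $ i))" by (rule L2_set_le_sum) simp
  also have "\<dots> = (\<Sum>i\<in>UNIV. if i = p then norm h else 0)" by (intro sum.cong) (auto simp: Ax_def)
  also have "\<dots> = norm h" by simp
  finally show ?thesis .
qed

lemma norm_upd_le: "norm (upd x p w - x) \<le> norm (w - x$p)"
  using norm_Ax[of p "w - x$p"] by (simp add: upd_Ax)

lemma bl_Ax: "bounded_linear (Ax p)"
proof (rule bounded_linear_intro[where K=1])
  show "\<And>x y. Ax p (x + y) = Ax p x + Ax p y" by (simp add: Ax_def vec_eq_iff)
  show "\<And>r x. Ax p (r *\<^sub>R x) = r *\<^sub>R Ax p x" by (simp add: Ax_def vec_eq_iff)
  show "\<And>x. norm (Ax p x) \<le> norm x * 1" using norm_Ax by simp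
qed

lemma upd_has_derivative: "((\<lambda>w. upd x p w) has_derivative Ax p) (at w)"
proof -
  have "((\<lambda>w. x + Ax p (w - x$p)) has_derivative (\<lambda>h. 0 + Ax p (h - 0))) (at w)"
    by (intro derivative_intros bounded_linear.has_derivative[OF bl_Ax]) 
  then show ?thesis by (simp add: upd_Ax[abs_def])
qed

lemma continuous_on_upd[continuous_intros]:
  "continuous_on S a \<Longrightarrow> continuous_on S b \<Longrightarrow> continuous_on S (\<lambda>z. upd (a z) k (b z))"
  unfolding upd_def
proof (rule continuous_on_vec_lambda)
  fix m assume "continuous_on S a" "continuous_on S b"
  then show "continuous_on S (\<lambda>z. if m = k then b z else a z $ m)"
    by (cases "m = k") (auto intro: continuous_intros)
qed

lemma open_slice: "open \<Omega> \<Longrightarrow> open {w. upd x p w \<in> \<Omega>}"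
proof -
  assume "open \<Omega>"
  have "continuous_on UNIV (\<lambda>w. upd x p w)" by (intro continuous_intros)
  from open_vimage[OF \<open>open \<Omega>\<close> this] show ?thesis by (simp add: vimage_def)
qed

lemma tube:
  assumes "norm (y - x) < a" "norm (\<eta> - x$k) \<le> b"
  shows "norm (upd y k \<eta> - x) < a + a + b"
proof -
  have "norm (upd y k \<eta> - x) \<le> norm (upd y k \<eta> - y) + norm (y - x)"
    using norm_triangle_ineq[of "upd y k \<eta> - y" "y - x"] by simp
  also have "norm (upd y k \<eta> - y) \<le> norm (\<eta> - y$k)" by (rule norm_upd_le)
  also have "norm (\<eta> - y$k) \<le> norm (\<eta> - x$k) + norm (x$k - y$k)"
    using norm_triangle_ineq[of "\<eta> - x$k" "x$k - y$k"] by simp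
  also have "norm (x$k - y$k) \<le> norm (x - y)" using Finite_Cartesian_Product.norm_nth_le[of "x - y" k] by simp
  also have "norm (x - y) = norm (y - x)" by (rule norm_minus_commute)
  finally show ?thesis using assms by linarith
qed

definition SH :: "(complex^'n) set \<Rightarrow> (complex^'n \<Rightarrow> complex) \<Rightarrow> bool" where
  "SH \<Omega> f \<longleftrightarrow> continuous_on \<Omega> f \<and> (\<forall>x\<in>\<Omega>. \<forall>p. (\<lambda>w. f (upd x p w)) field_differentiable (at (x$p)))"

lemma slice_holo:
  assumes "SH \<Omega> f" "open \<Omega>"
  shows "(\<lambda>w. f (upd x p w)) holomorphic_on {w. upd x p w \<in> \<Omega>}"
proof -
  have "(\<lambda>w. f (upd x p w)) field_differentiable (at w)" if "upd x p w \<in> \<Omega>" for w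
  proof -
    have "(\<lambda>z. f (upd (upd x p w) p z)) field_differentiable (at (upd x p w $ p))"
      using assms that unfolding SH_def by blast
    then show ?thesis by simp
  qed
  then show ?thesis using open_slice[OF assms(2)]
    by (simp add: holomorphic_on_open field_differentiable_def)
qed

lemma slice_deriv:
  assumes "SH \<Omega> f" "upd x p w \<in> \<Omega>"
  shows "((\<lambda>z. f (upd x p z)) has_field_derivative pd p f (upd x p w)) (at w)"
proof -
  have "(\<lambda>z. f (upd (upd x p w) p z)) field_differentiable (at (upd x p w $ p))"
    using assms unfolding SH_def by blast
  then have "(\<lambda>z. f (upd x p z)) field_differentiable (at w)" by simp
  then show ?thesis by (simp add: pd_upd DERIV_deriv_iff_field_differentiable)
qed

lemma slice_deriv0:
  assumes "SH \<Omega> f" "x \<in> \<Omega>"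
  shows "((\<lambda>z. f (upd x p z)) has_field_derivative pd p f x) (at (x$p))"
  using slice_deriv[of \<Omega> f x p "x$p"] assms by simp

lemma holo_SH:
  assumes "holo_on u \<Omega>"
  shows "SH \<Omega> u"
  unfolding SH_def
proof safe
  show "continuous_on \<Omega> u"
    using assms unfolding holo_on_def
    by (intro continuous_at_imp_continuous_on ballI) (auto dest: has_derivative_continuous)
next
  fix x p assume "x \<in> \<Omega>"
  then obtain D where D: "(u has_derivative D) (at x)" "\<And>(c::complex) w. D (c *s w) = c * D w"
    using assms unfolding holo_on_def by blast
  have "((\<lambda>w. u (upd x p w)) has_derivative (D \<circ> Ax p)) (at (x$p))"
  proof -
    have "(u has_derivative D) (at (upd x p (x$p)))" using D(1) by simp
    from diff_chain_at[OF upd_has_derivative this] show ?thesis by (simp add: o_def)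
  qed
  moreover have "D \<circ> Ax p = (*) (D (Ax p 1))"
  proof
    fix h
    have "Ax p h = h *s Ax p 1" by (simp add: Ax_def vec_eq_iff)
    then show "(D \<circ> Ax p) h = D (Ax p 1) * h" by (simp add: D(2))
  qed
  ultimately have "((\<lambda>w. u (upd x p w)) has_field_derivative D (Ax p 1)) (at (x$p))"
    unfolding has_field_derivative_def by metis
  then show "(\<lambda>w. u (upd x p w)) field_differentiable (at (x$p))"
    unfolding field_differentiable_def by blast
qed


definition cp :: "complex \<Rightarrow> real \<Rightarrow> real \<Rightarrow> complex" where
  "cp c r t = c + of_real r * exp (2 * of_real pi * \<i> * of_real t)"

definition kern :: "complex \<Rightarrow> real \<Rightarrow> (complex \<Rightarrow> complex) \<Rightarrow> complex \<Rightarrow> real \<Rightarrow> complex" where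
  "kern c r h z t = h (cp c r t) / (cp c r t - z)^2 * (2 * of_real pi * \<i> * of_real r * exp (2 * of_real pi * \<i> * of_real t))"

lemma cp_circ: "cp c r t = circlepath c r t" by (simp add: cp_def circlepath)

lemma norm_cp: "r \<ge> 0 \<Longrightarrow> norm (cp c r t - c) = r"
  by (simp add: cp_def norm_mult)

lemma cp_ne: "norm (z - c) < r \<Longrightarrow> cp c r t - z \<noteq> 0"
proof
  assume a: "norm (z - c) < r" "cp c r t - z = 0"
  then have "r \<ge> 0" using norm_ge_zero[of "z - c"] by linarith
  then have "norm (cp c r t - c) = r" by (rule norm_cp)
  with a show False by simp
qed

lemma continuous_on_cp[continuous_intros]:
  "continuous_on S g \<Longrightarrow> continuous_on S (\<lambda>z. cp c r (g z))"
  unfolding cp_def by (intro continuous_intros)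

lemma cauchy_rep:
  assumes holo: "h holomorphic_on W" and sub: "cball c r \<subseteq> W" and z: "z \<in> ball c r"
  shows "(kern c r h z has_integral (2 * of_real pi * \<i> * deriv h z)) {0..1}"
proof -
  have hc: "h holomorphic_on cball c r" using holomorphic_on_subset[OF holo sub] .
  have "((\<lambda>u. h u / (u - z) ^ Suc 1) has_contour_integral (2 * pi * \<i> / fact 1 * (deriv ^^ 1) h z)) (circlepath c r)"
  proof (rule Cauchy_has_contour_integral_higher_derivative_circlepath)
    show "continuous_on (cball c r) h" using hc by (rule holomorphic_on_imp_continuous_on)
    show "h holomorphic_on ball c r" using hc by (rule holomorphic_on_subset) auto
  qed (fact z)
  then have "((\<lambda>t. h (circlepath c r t) / (circlepath c r t - z)^2 * vector_derivative (circlepath c r) (at t within {0..1}))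
       has_integral (2 * of_real pi * \<i> * deriv h z)) {0..1}"
    unfolding has_contour_integral_def by (simp add: power2_eq_square)
  then show ?thesis
    by (rule has_integral_eq[rotated]) (simp add: kern_def cp_circ vector_derivative_circlepath01)
qed

lemma SH_pd_cont:
  assumes SH: "SH \<Omega> f" and op: "open \<Omega>"
  shows "continuous_on \<Omega> (pd k f)"
proof (rule continuous_at_imp_continuous_on, rule ballI)
  fix x0 assume x0: "x0 \<in> \<Omega>"
  obtain \<delta> where d: "\<delta> > 0" "ball x0 \<delta> \<subseteq> \<Omega>" using op x0 open_contains_ball by blast
  define r where "r = \<delta>/3"
  have r: "r > 0" using d by (simp add: r_def)
  define c where "c = x0$k"
  have fc: "continuous_on \<Omega> f" using SH by (simp add: SH_def)
  have tubeO: "upd y k \<eta> \<in> \<Omega>" if "norm (y - x0) < r" "norm (\<eta> - c) \<le> r" for y \<eta>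
  proof -
    have "norm (upd y k \<eta> - x0) < r + r + r" using tube[OF that[unfolded c_def]] .
    then have "upd y k \<eta> \<in> ball x0 \<delta>" by (simp add: dist_norm norm_minus_commute r_def)
    then show ?thesis using d by blast
  qed
  have rep: "pd k f y = integral (cbox 0 1) (kern c r (\<lambda>\<eta>. f (upd y k \<eta>)) (y$k)) / (2 * of_real pi * \<i>)"
    if y: "y \<in> ball x0 r" for y
  proof -
    have ny: "norm (y - x0) < r" using y by (simp add: dist_norm norm_minus_commute)
    have sub: "cball c r \<subseteq> {\<eta>. upd y k \<eta> \<in> \<Omega>}"
      using tubeO[OF ny] by (auto simp: dist_norm norm_minus_commute)
    have "norm (c - y$k) \<le> norm (x0 - y)"
      using Finite_Cartesian_Product.norm_nth_le[of "x0 - y" k] by (simp add: c_def)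
    then have yk: "y$k \<in> ball c r" using ny by (simp add: dist_norm norm_minus_commute)
    from cauchy_rep[OF slice_holo[OF SH op] sub yk]
    have "integral (cbox 0 1) (kern c r (\<lambda>\<eta>. f (upd y k \<eta>)) (y$k)) = 2 * of_real pi * \<i> * pd k f y"
      by (simp add: pd_upd integral_unique)
    then show ?thesis by simp
  qed
  have cont: "continuous_on (ball x0 r \<times> cbox 0 1) (\<lambda>(y, t). kern c r (\<lambda>\<eta>. f (upd y k \<eta>)) (y$k) t)"
  proof -
    have c1: "continuous_on (ball x0 r \<times> cbox 0 1) (\<lambda>z. f (upd (fst z) k (cp c r (snd z))))"
    proof (rule continuous_on_compose2[OF fc])
      show "continuous_on (ball x0 r \<times> cbox 0 1) (\<lambda>z. upd (fst z) k (cp c r (snd z)))"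
        by (intro continuous_intros)
      show "(\<lambda>z. upd (fst z) k (cp c r (snd z))) ` (ball x0 r \<times> cbox 0 1) \<subseteq> \<Omega>"
        using tubeO norm_cp r by (auto simp: dist_norm norm_minus_commute)
    qed
    have ne: "cp c r (snd z) - fst z $ k \<noteq> 0" if "z \<in> ball x0 r \<times> cbox 0 1" for z
    proof (rule cp_ne)
      have "norm (fst z $ k - c) \<le> norm (fst z - x0)"
        using Finite_Cartesian_Product.norm_nth_le[of "fst z - x0" k] by (simp add: c_def)
      then show "norm (fst z $ k - c) < r" using that by (auto simp: dist_norm norm_minus_commute)
    qed
    have "continuous_on (ball x0 r \<times> cbox 0 1) (\<lambda>z. f (upd (fst z) k (cp c r (snd z))) / (cp c r (snd z) - fst z $ k)^2 *
        (2 * of_real pi * \<i> * of_real r * exp (2 * of_real pi * \<i> * of_real (snd z))))"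
      using ne by (intro continuous_intros c1) auto
    then show ?thesis by (simp add: kern_def split_beta)
  qed
  have "continuous_on (ball x0 r) (\<lambda>y. integral (cbox 0 1) (kern c r (\<lambda>\<eta>. f (upd y k \<eta>)) (y$k)) / (2 * of_real pi * \<i>))"
    using pi_gt_zero by (intro continuous_intros integral_continuous_on_param[OF cont]) auto
  then have "continuous_on (ball x0 r) (pd k f)"
    by (rule continuous_on_cong[THEN iffD1, rotated 2]) (auto simp: rep)
  then show "isCont (pd k f) x0" using r by (simp add: continuous_on_eq_continuous_at)
qed


lemma upd_same': "p \<noteq> k \<Longrightarrow> upd (upd x k \<eta>) p (x$p) = upd x k \<eta>"
  using upd_same[of "upd x k \<eta>" p] by simp

lemma SH_cross:
  assumes SH: "SH \<Omega> f" and op: "open \<Omega>" and x: "x \<in> \<Omega>" and pk: "p \<noteq> k"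
  obtains r where "r > 0" "cball (x$k) r \<subseteq> {\<eta>. upd x k \<eta> \<in> \<Omega>}"
    "((\<lambda>w. pd k f (upd x p w)) has_field_derivative
        integral (cbox 0 1) (kern (x$k) r (\<lambda>\<eta>. pd p f (upd x k \<eta>)) (x$k)) / (2 * of_real pi * \<i>)) (at (x$p))"
proof -
  obtain \<delta> where d: "\<delta> > 0" "ball x \<delta> \<subseteq> \<Omega>" using op x open_contains_ball by blast
  define r where "r = \<delta>/3"
  have r: "r > 0" using d by (simp add: r_def)
  define c where "c = x$k"
  have kp: "k \<noteq> p" using pk by simp
  have tubeO: "upd (upd x p w) k \<eta> \<in> \<Omega>" if "norm (w - x$p) < r" "norm (\<eta> - c) \<le> r" for w \<eta>
  proof -
    have "norm (upd x p w - x) < r" using norm_upd_le[of x p w] that(1) by linarith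
    from tube[OF this that(2)[unfolded c_def]]
    have "norm (upd (upd x p w) k \<eta> - x) < r + r + r" .
    then have "upd (upd x p w) k \<eta> \<in> ball x \<delta>" by (simp add: dist_norm norm_minus_commute r_def)
    then show ?thesis using d by blast
  qed
  define U where "U = ball (x$p) r"
  define F where "F w t = kern c r (\<lambda>\<eta>. f (upd (upd x p w) k \<eta>)) c t" for w t
  define Fx where "Fx w t = pd p f (upd (upd x k (cp c r t)) p w) / (cp c r t - c)^2 *
      (2 * of_real pi * \<i> * of_real r * exp (2 * of_real pi * \<i> * of_real t))" for w t
  have sub0: "cball c r \<subseteq> {\<eta>. upd x k \<eta> \<in> \<Omega>}"
    using tubeO[of "x$p"] r by (auto simp: dist_norm norm_minus_commute)
  have cin: "c \<in> ball c r" using r by simp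
  have rep: "(F w has_integral (2 * of_real pi * \<i> * pd k f (upd x p w))) (cbox 0 1)" if w: "w \<in> U" for w
  proof -
    have nw: "norm (w - x$p) < r" using w by (simp add: U_def dist_norm norm_minus_commute)
    have sub: "cball c r \<subseteq> {\<eta>. upd (upd x p w) k \<eta> \<in> \<Omega>}"
      using tubeO[OF nw] by (auto simp: dist_norm norm_minus_commute)
    have "pd k f (upd x p w) = deriv (\<lambda>\<eta>. f (upd (upd x p w) k \<eta>)) c"
      using kp by (simp add: pd_upd c_def)
    with cauchy_rep[OF slice_holo[OF SH op] sub cin] show ?thesis
      by (simp add: F_def[abs_def])
  qed
  have der: "((\<lambda>w. F w t) has_field_derivative Fx w t) (at w within U)"
    if w: "w \<in> U" and t: "t \<in> cbox 0 1" for w t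
  proof -
    have nw: "norm (w - x$p) < r" using w by (simp add: U_def dist_norm norm_minus_commute)
    have "upd (upd x k (cp c r t)) p w \<in> \<Omega>"
      using tubeO[OF nw, of "cp c r t"] norm_cp[of r c t] r by (simp add: upd_swap[OF kp])
    have d1: "((\<lambda>w. f (upd (upd x k (cp c r t)) p w)) has_field_derivative pd p f (upd (upd x k (cp c r t)) p w)) (at w)"
      by (rule slice_deriv[OF SH \<open>upd (upd x k (cp c r t)) p w \<in> \<Omega>\<close>])
    have "((\<lambda>w. f (upd (upd x k (cp c r t)) p w) / (cp c r t - c)^2 *
        (2 * of_real pi * \<i> * of_real r * exp (2 * of_real pi * \<i> * of_real t))) has_field_derivative Fx w t) (at w)"
      unfolding Fx_def by (intro DERIV_cmult_right DERIV_cdivide d1)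
    then have "((\<lambda>w. F w t) has_field_derivative Fx w t) (at w)"
      by (simp add: F_def kern_def upd_swap[OF kp])
    then show ?thesis by (rule has_field_derivative_at_within)
  qed
  have cont: "continuous_on (U \<times> cbox 0 1) (\<lambda>(w, t). Fx w t)"
  proof -
    have c1: "continuous_on (U \<times> cbox 0 1) (\<lambda>z. pd p f (upd (upd x k (cp c r (snd z))) p (fst z)))"
    proof (rule continuous_on_compose2[OF SH_pd_cont[OF SH op]])
      show "continuous_on (U \<times> cbox 0 1) (\<lambda>z. upd (upd x k (cp c r (snd z))) p (fst z))"
        by (intro continuous_intros)
      show "(\<lambda>z. upd (upd x k (cp c r (snd z))) p (fst z)) ` (U \<times> cbox 0 1) \<subseteq> \<Omega>"
      proof (rule image_subsetI)
        fix z assume "z \<in> U \<times> cbox (0::real) 1"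
        then have nw: "norm (fst z - x$p) < r" by (auto simp: U_def dist_norm norm_minus_commute)
        show "upd (upd x k (cp c r (snd z))) p (fst z) \<in> \<Omega>"
          using tubeO[OF nw, of "cp c r (snd z)"] norm_cp[of r c "snd z"] r by (simp add: upd_swap[OF kp])
      qed
    qed
    have ne: "cp c r (snd z) - c \<noteq> 0" for z using cp_ne[of c c r] r by simp
    have "continuous_on (U \<times> cbox 0 1) (\<lambda>z. pd p f (upd (upd x k (cp c r (snd z))) p (fst z)) / (cp c r (snd z) - c)^2 *
        (2 * of_real pi * \<i> * of_real r * exp (2 * of_real pi * \<i> * of_real (snd z))))"
      using ne by (intro continuous_intros c1) auto
    then show ?thesis by (simp add: Fx_def split_beta)
  qed
  have xpU: "x$p \<in> U" using r by (simp add: U_def)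
  have "((\<lambda>w. integral (cbox 0 1) (F w)) has_field_derivative integral (cbox 0 1) (Fx (x$p))) (at (x$p) within U)"
    by (rule leibniz_rule_field_derivative[OF der _ cont xpU convex_ball[of "x$p" r, folded U_def]])
       (use rep in \<open>auto simp: has_integral_iff\<close>)
  then have "((\<lambda>w. integral (cbox 0 1) (F w)) has_field_derivative integral (cbox 0 1) (Fx (x$p))) (at (x$p))"
    using at_within_open[OF xpU] by (simp add: U_def)
  then have "((\<lambda>w. integral (cbox 0 1) (F w) / (2 * of_real pi * \<i>)) has_field_derivative
       integral (cbox 0 1) (Fx (x$p)) / (2 * of_real pi * \<i>)) (at (x$p))"
    by (rule DERIV_cdivide)
  then have D: "((\<lambda>w. pd k f (upd x p w)) has_field_derivative
       integral (cbox 0 1) (Fx (x$p)) / (2 * of_real pi * \<i>)) (at (x$p))"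
  proof (rule has_field_derivative_transform_within_open[OF _ _ xpU])
    show "open U" by (simp add: U_def)
    fix w assume "w \<in> U"
    from rep[OF this] show "integral (cbox 0 1) (F w) / (2 * of_real pi * \<i>) = pd k f (upd x p w)"
      using pi_gt_zero by (simp add: integral_unique)
  qed
  have "Fx (x$p) = kern c r (\<lambda>\<eta>. pd p f (upd x k \<eta>)) c"
    by (simp add: Fx_def kern_def upd_same'[OF pk] fun_eq_iff)
  with D have "((\<lambda>w. pd k f (upd x p w)) has_field_derivative
        integral (cbox 0 1) (kern (x$k) r (\<lambda>\<eta>. pd p f (upd x k \<eta>)) (x$k)) / (2 * of_real pi * \<i>)) (at (x$p))"
    by (simp add: c_def)
  with r sub0 show ?thesis using that by (simp add: c_def)
qed

lemma SH_pd:
  assumes SH: "SH \<Omega> f" and op: "open \<Omega>"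
  shows "SH \<Omega> (pd k f)"
  unfolding SH_def
proof (intro conjI ballI allI)
  show "continuous_on \<Omega> (pd k f)" by (rule SH_pd_cont[OF SH op])
next
  fix x p assume x: "x \<in> \<Omega>"
  show "(\<lambda>w. pd k f (upd x p w)) field_differentiable at (x $ p)"
  proof (cases "p = k")
    case True
    define W where "W = {w. upd x k w \<in> \<Omega>}"
    have oW: "open W" unfolding W_def by (rule open_slice[OF op])
    have xW: "x$k \<in> W" using x by (simp add: W_def)
    have "deriv (\<lambda>w. f (upd x k w)) holomorphic_on W"
      unfolding W_def by (intro holomorphic_deriv slice_holo[OF SH op] open_slice[OF op])
    then have "deriv (\<lambda>w. f (upd x k w)) field_differentiable at (x$k)"
      using oW xW holomorphic_on_imp_differentiable_at by blast
    then obtain D where D: "(deriv (\<lambda>w. f (upd x k w)) has_field_derivative D) (at (x$k))"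
      unfolding field_differentiable_def by blast
    have "((\<lambda>w. pd k f (upd x k w)) has_field_derivative D) (at (x$k))"
      by (rule has_field_derivative_transform_within_open[OF D oW xW]) (simp add: pd_upd)
    then show ?thesis using True unfolding field_differentiable_def by blast
  next
    case False
    obtain r where "((\<lambda>w. pd k f (upd x p w)) has_field_derivative
        integral (cbox 0 1) (kern (x$k) r (\<lambda>\<eta>. pd p f (upd x k \<eta>)) (x$k)) / (2 * of_real pi * \<i>)) (at (x$p))"
      using SH_cross[OF SH op x False] by blast
    then show ?thesis unfolding field_differentiable_def by blast
  qed
qed

lemma SH_sym:
  assumes SH: "SH \<Omega> f" and op: "open \<Omega>" and x: "x \<in> \<Omega>"
  shows "pd p (pd k f) x = pd k (pd p f) x"
proof (cases "p = k")
  case False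
  obtain r where r: "r > 0" "cball (x$k) r \<subseteq> {\<eta>. upd x k \<eta> \<in> \<Omega>}"
    "((\<lambda>w. pd k f (upd x p w)) has_field_derivative
        integral (cbox 0 1) (kern (x$k) r (\<lambda>\<eta>. pd p f (upd x k \<eta>)) (x$k)) / (2 * of_real pi * \<i>)) (at (x$p))"
    using SH_cross[OF SH op x False] by blast
  have 1: "pd p (pd k f) x = integral (cbox 0 1) (kern (x$k) r (\<lambda>\<eta>. pd p f (upd x k \<eta>)) (x$k)) / (2 * of_real pi * \<i>)"
    unfolding pd_upd[of p "pd k f"] by (rule DERIV_imp_deriv[OF r(3)])
  have cin: "x$k \<in> ball (x$k) r" using r by simp
  from cauchy_rep[OF slice_holo[OF SH_pd[OF SH op] op] r(2) cin]
  have "integral (cbox 0 1) (kern (x$k) r (\<lambda>\<eta>. pd p f (upd x k \<eta>)) (x$k)) = 2 * of_real pi * \<i> * pd k (pd p f) x"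
    by (simp add: integral_unique pd_upd[of k "pd p f"])
  with 1 show ?thesis using pi_gt_zero by simp
qed simp

lemma alg0:
  fixes d A B C ai aj :: complex
  assumes "d \<noteq> 0"
  shows "d * (A + aj / d * B + ai / (- d) * C) = d*A + aj*B - ai*C"
  using assms by (simp add: field_simps)

lemma alg1:
  fixes d ai aj ui uj uij ujj T1 :: complex
  assumes "d \<noteq> 0" "d*uij + aj*ui - ai*uj = 0" "- uij + d*T1 + aj*uij - ai*ujj = 0"
  shows "ujj + d*T1 + (aj-1)*uij + (aj-1)/d * (uj + d*uij + aj*ui) + (ai+1)/(-d) * (d*ujj + (aj-1)*uj) = 0"
proof -
  let ?L = "ujj + d*T1 + (aj-1)*uij + (aj-1)/d * (uj + d*uij + aj*ui) + (ai+1)/(-d) * (d*ujj + (aj-1)*uj)"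
  have "d * ?L = d*(- uij + d*T1 + aj*uij - ai*ujj) + (aj-1)*(d*uij + aj*ui - ai*uj)"
    using assms(1) by (simp add: field_simps)
  also have "\<dots> = 0" using assms by simp
  finally have "d * ?L = 0" .
  then show ?thesis using assms(1) by (simp only: mult_eq_0_iff) blast
qed

lemma alg2:
  fixes d e g ai aj aq ui uj uq uij uiq ujq T2 :: complex
  assumes "e \<noteq> 0" "g = e - d" "e*uiq + aq*ui - ai*uq = 0" "g*ujq + aq*uj - aj*uq = 0"
    "e*T2 + aq*uij - ai*ujq = 0"
  shows "ujq + d*T2 + aj*uiq + aq/e * (uj + d*uij + aj*ui) + (ai+1)/(-e) * (d*ujq + aj*uq) = 0"
proof -
  let ?L = "ujq + d*T2 + aj*uiq + aq/e * (uj + d*uij + aj*ui) + (ai+1)/(-e) * (d*ujq + aj*uq)"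
  have "e * ?L = d*(e*T2 + aq*uij - ai*ujq) + aj*(e*uiq + aq*ui - ai*uq) + (g*ujq + aq*uj - aj*uq)"
    unfolding assms(2) using assms(1) by (simp add: field_simps)
  also have "\<dots> = 0" using assms by simp
  finally have "e * ?L = 0" .
  then show ?thesis using assms(1) by (simp only: mult_eq_0_iff) blast
qed

lemma alg3:
  fixes d g aj aq uj uq ujj ujq T3 :: complex
  assumes "g \<noteq> 0" "g*ujq + aq*uj - aj*uq = 0" "ujq + g*T3 + aq*ujj - aj*ujq = 0"
  shows "- ujq + d*T3 + aj*ujq + aq/g * (d*ujj + (aj-1)*uj) + (aj-1)/(-g) * (d*ujq + aj*uq) = 0"
proof -
  let ?L = "- ujq + d*T3 + aj*ujq + aq/g * (d*ujj + (aj-1)*uj) + (aj-1)/(-g) * (d*ujq + aj*uq)"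
  have "g * ?L = d*(ujq + g*T3 + aq*ujj - aj*ujq) + (aj-1)*(g*ujq + aq*uj - aj*uq)"
    using assms(1) by (simp add: field_simps)
  also have "\<dots> = 0" using assms by simp
  finally have "g * ?L = 0" .
  then show ?thesis using assms(1) by (simp only: mult_eq_0_iff) blast
qed

lemma pd_eqI: "((\<lambda>w. h (upd x p w)) has_field_derivative D) (at (x$p)) \<Longrightarrow> pd p h x = D"
  by (simp add: pd_upd DERIV_imp_deriv)

lemma pd_cong:
  assumes "open \<Omega>" "x \<in> \<Omega>" "\<And>y. y \<in> \<Omega> \<Longrightarrow> f y = g y"
  shows "pd p f x = pd p g x"
  unfolding pd_upd
proof (rule deriv_cong_ev[OF _ refl])
  have "eventually (\<lambda>w. w \<in> {w. upd x p w \<in> \<Omega>}) (nhds (x$p))"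
    by (rule eventually_nhds_in_open[OF open_slice[OF assms(1)]]) (use assms(2) in simp)
  then show "\<forall>\<^sub>F w in nhds (x $ p). f (upd x p w) = g (upd x p w)"
    by (rule eventually_mono) (simp add: assms(3))
qed

lemma pd_zero:
  assumes "open \<Omega>" "x \<in> \<Omega>" "\<And>y. y \<in> \<Omega> \<Longrightarrow> f y = 0"
  shows "pd p f x = 0"
proof -
  have "pd p f x = pd p (\<lambda>_. 0) x" by (rule pd_cong[OF assms(1,2)]) (simp add: assms(3))
  also have "\<dots> = 0" by (simp add: pd_upd)
  finally show ?thesis .
qed

lemma sd: "SH \<Omega> f \<Longrightarrow> x \<in> \<Omega> \<Longrightarrow> ((\<lambda>z. f (upd x p z)) has_field_derivative pd p f x) (at (x$p) within s)"
  by (rule has_field_derivative_at_within[OF slice_deriv0])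

lemma upd_nth_deriv:
  "((\<lambda>w. upd x p w $ m) has_field_derivative (if m = p then 1 else 0)) (at z within s)"
  by (cases "m = p") (auto intro: derivative_eq_intros)

theorem mainTheorem3:
  fixes \<alpha> :: "complex^'n" and i j q :: 'n
    and \<Omega> :: "(complex^'n) set" and u :: "complex^'n \<Rightarrow> complex"
  assumes "CARD('n) \<ge> 3"
    and "i \<noteq> j" "i \<noteq> q" "j \<noteq> q"
    and "open \<Omega>" "connected \<Omega>" "simply_connected \<Omega>"
    and "\<Omega> \<subseteq> {x. \<forall>a b. a \<noteq> b \<longrightarrow> x $ a \<noteq> x $ b}"
    and "holo_on u \<Omega>"
    and "\<forall>x\<in>\<Omega>. Mop \<alpha> i j u x = 0"
    and "\<forall>x\<in>\<Omega>. Mop \<alpha> i q u x = 0"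
    and "\<forall>x\<in>\<Omega>. Mop \<alpha> j q u x = 0"
  shows "\<forall>x\<in>\<Omega>. Mop (\<alpha> + unitv i - unitv j) i j (Lop \<alpha> i j u) x = 0
       \<and> Mop (\<alpha> + unitv i - unitv j) i q (Lop \<alpha> i j u) x = 0
       \<and> Mop (\<alpha> + unitv i - unitv j) j q (Lop \<alpha> i j u) x = 0"
proof -
  note op = assms(5)
  have su: "SH \<Omega> u" using holo_SH assms(9) .
  have S: "\<And>f k. SH \<Omega> f \<Longrightarrow> SH \<Omega> (pd k f)" using SH_pd op by blast
  have sym: "\<And>f a b y. SH \<Omega> f \<Longrightarrow> y \<in> \<Omega> \<Longrightarrow> pd a (pd b f) y = pd b (pd a f) y" using SH_sym op by blast
  have nz: "\<And>y a b. y \<in> \<Omega> \<Longrightarrow> a \<noteq> b \<Longrightarrow> y$a - y$b \<noteq> 0" using assms(8) by auto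
  have ij: "i \<noteq> j" "j \<noteq> i" and iq: "i \<noteq> q" "q \<noteq> i" and jq: "j \<noteq> q" "q \<noteq> j" using assms(2-4) by auto
  have s1: "SH \<Omega> (pd k u)" for k using S[OF su] .
  have s2: "SH \<Omega> (pd k (pd l u))" for k l using S[OF s1] .
  define v where "v = Lop \<alpha> i j u"
  have E1: "(y$i - y$j) * pd i (pd j u) y + \<alpha>$j * pd i u y - \<alpha>$i * pd j u y = 0" if y: "y \<in> \<Omega>" for y
  proof -
    have "y$i - y$j \<noteq> 0" using nz[OF y] ij by auto
    have "y$j - y$i = - (y$i - y$j)" by simp
    then have "(y$i - y$j) * Mop \<alpha> i j u y = (y$i - y$j) * pd i (pd j u) y + \<alpha>$j * pd i u y - \<alpha>$i * pd j u y"
      unfolding Mop_def by (simp only:) (rule alg0[OF \<open>y$i - y$j \<noteq> 0\<close>])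
    then show ?thesis using assms(10) y by simp
  qed
  have E2: "(y$i - y$q) * pd i (pd q u) y + \<alpha>$q * pd i u y - \<alpha>$i * pd q u y = 0" if y: "y \<in> \<Omega>" for y
  proof -
    have "y$i - y$q \<noteq> 0" using nz[OF y] iq by auto
    have "y$q - y$i = - (y$i - y$q)" by simp
    then have "(y$i - y$q) * Mop \<alpha> i q u y = (y$i - y$q) * pd i (pd q u) y + \<alpha>$q * pd i u y - \<alpha>$i * pd q u y"
      unfolding Mop_def by (simp only:) (rule alg0[OF \<open>y$i - y$q \<noteq> 0\<close>])
    then show ?thesis using assms(11) y by simp
  qed
  have E3: "(y$j - y$q) * pd j (pd q u) y + \<alpha>$q * pd j u y - \<alpha>$j * pd q u y = 0" if y: "y \<in> \<Omega>" for y
  proof -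
    have "y$j - y$q \<noteq> 0" using nz[OF y] jq by auto
    have "y$q - y$j = - (y$j - y$q)" by simp
    then have "(y$j - y$q) * Mop \<alpha> j q u y = (y$j - y$q) * pd j (pd q u) y + \<alpha>$q * pd j u y - \<alpha>$j * pd q u y"
      unfolding Mop_def by (simp only:) (rule alg0[OF \<open>y$j - y$q \<noteq> 0\<close>])
    then show ?thesis using assms(12) y by simp
  qed
  have Vj: "pd j v y = (y$i - y$j) * pd j (pd j u) y + (\<alpha>$j - 1) * pd j u y" if y: "y \<in> \<Omega>" for y
    unfolding v_def Lop_def
    by (rule pd_eqI) (use y ij in \<open>auto intro!: derivative_eq_intros sd[OF su] sd[OF s1] upd_nth_deriv simp: algebra_simps\<close>)
  have Vi: "pd i v y = pd j u y + (y$i - y$j) * pd i (pd j u) y + \<alpha>$j * pd i u y" if y: "y \<in> \<Omega>" for y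
    unfolding v_def Lop_def
    by (rule pd_eqI) (use y ij in \<open>auto intro!: derivative_eq_intros sd[OF su] sd[OF s1] upd_nth_deriv simp: algebra_simps\<close>)
  have Vq: "pd q v y = (y$i - y$j) * pd q (pd j u) y + \<alpha>$j * pd q u y" if y: "y \<in> \<Omega>" for y
    unfolding v_def Lop_def
    by (rule pd_eqI) (use y ij iq jq in \<open>auto intro!: derivative_eq_intros sd[OF su] sd[OF s1] upd_nth_deriv simp: algebra_simps\<close>)
  show ?thesis
  proof (intro ballI conjI)
    fix x assume x: "x \<in> \<Omega>"
    have Vij: "pd i (pd j v) x = pd j (pd j u) x + (x$i - x$j) * pd i (pd j (pd j u)) x + (\<alpha>$j - 1) * pd i (pd j u) x"
    proof -
      have "pd i (pd j v) x = pd i (\<lambda>y. (y$i - y$j) * pd j (pd j u) y + (\<alpha>$j - 1) * pd j u y) x"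
        by (rule pd_cong[OF op x]) (simp add: Vj)
      also have "\<dots> = pd j (pd j u) x + (x$i - x$j) * pd i (pd j (pd j u)) x + (\<alpha>$j - 1) * pd i (pd j u) x"
        by (rule pd_eqI) (use x ij in \<open>auto intro!: derivative_eq_intros sd[OF s1] sd[OF s2] upd_nth_deriv simp: algebra_simps\<close>)
      finally show ?thesis .
    qed
    have Viq: "pd i (pd q v) x = pd q (pd j u) x + (x$i - x$j) * pd i (pd q (pd j u)) x + \<alpha>$j * pd i (pd q u) x"
    proof -
      have "pd i (pd q v) x = pd i (\<lambda>y. (y$i - y$j) * pd q (pd j u) y + \<alpha>$j * pd q u y) x"
        by (rule pd_cong[OF op x]) (simp add: Vq)
      also have "\<dots> = pd q (pd j u) x + (x$i - x$j) * pd i (pd q (pd j u)) x + \<alpha>$j * pd i (pd q u) x"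
        by (rule pd_eqI) (use x ij in \<open>auto intro!: derivative_eq_intros sd[OF s1] sd[OF s2] upd_nth_deriv simp: algebra_simps\<close>)
      finally show ?thesis .
    qed
    have Vjq: "pd j (pd q v) x = - pd q (pd j u) x + (x$i - x$j) * pd j (pd q (pd j u)) x + \<alpha>$j * pd j (pd q u) x"
    proof -
      have "pd j (pd q v) x = pd j (\<lambda>y. (y$i - y$j) * pd q (pd j u) y + \<alpha>$j * pd q u y) x"
        by (rule pd_cong[OF op x]) (simp add: Vq)
      also have "\<dots> = - pd q (pd j u) x + (x$i - x$j) * pd j (pd q (pd j u)) x + \<alpha>$j * pd j (pd q u) x"
        by (rule pd_eqI) (use x ij in \<open>auto intro!: derivative_eq_intros sd[OF s1] sd[OF s2] upd_nth_deriv simp: algebra_simps\<close>)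
      finally show ?thesis .
    qed
    have D1: "- pd i (pd j u) x + (x$i - x$j) * pd j (pd i (pd j u)) x + \<alpha>$j * pd j (pd i u) x - \<alpha>$i * pd j (pd j u) x = 0"
    proof -
      have "pd j (\<lambda>y. (y$i - y$j) * pd i (pd j u) y + \<alpha>$j * pd i u y - \<alpha>$i * pd j u y) x = 0"
        by (rule pd_zero[OF op x E1])
      moreover have "pd j (\<lambda>y. (y$i - y$j) * pd i (pd j u) y + \<alpha>$j * pd i u y - \<alpha>$i * pd j u y) x =
          - pd i (pd j u) x + (x$i - x$j) * pd j (pd i (pd j u)) x + \<alpha>$j * pd j (pd i u) x - \<alpha>$i * pd j (pd j u) x"
        by (rule pd_eqI) (use x ij in \<open>auto intro!: derivative_eq_intros sd[OF s1] sd[OF s2] upd_nth_deriv simp: algebra_simps\<close>)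
      ultimately show ?thesis by simp
    qed
    have D2: "(x$i - x$q) * pd j (pd i (pd q u)) x + \<alpha>$q * pd j (pd i u) x - \<alpha>$i * pd j (pd q u) x = 0"
    proof -
      have "pd j (\<lambda>y. (y$i - y$q) * pd i (pd q u) y + \<alpha>$q * pd i u y - \<alpha>$i * pd q u y) x = 0"
        by (rule pd_zero[OF op x E2])
      moreover have "pd j (\<lambda>y. (y$i - y$q) * pd i (pd q u) y + \<alpha>$q * pd i u y - \<alpha>$i * pd q u y) x =
          (x$i - x$q) * pd j (pd i (pd q u)) x + \<alpha>$q * pd j (pd i u) x - \<alpha>$i * pd j (pd q u) x"
        by (rule pd_eqI) (use x ij jq in \<open>auto intro!: derivative_eq_intros sd[OF s1] sd[OF s2] upd_nth_deriv simp: algebra_simps\<close>)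
      ultimately show ?thesis by simp
    qed
    have D3: "pd j (pd q u) x + (x$j - x$q) * pd j (pd j (pd q u)) x + \<alpha>$q * pd j (pd j u) x - \<alpha>$j * pd j (pd q u) x = 0"
    proof -
      have "pd j (\<lambda>y. (y$j - y$q) * pd j (pd q u) y + \<alpha>$q * pd j u y - \<alpha>$j * pd q u y) x = 0"
        by (rule pd_zero[OF op x E3])
      moreover have "pd j (\<lambda>y. (y$j - y$q) * pd j (pd q u) y + \<alpha>$q * pd j u y - \<alpha>$j * pd q u y) x =
          pd j (pd q u) x + (x$j - x$q) * pd j (pd j (pd q u)) x + \<alpha>$q * pd j (pd j u) x - \<alpha>$j * pd j (pd q u) x"
        by (rule pd_eqI) (use x ij jq in \<open>auto intro!: derivative_eq_intros sd[OF s1] sd[OF s2] upd_nth_deriv simp: algebra_simps\<close>)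
      ultimately show ?thesis by simp
    qed
    have sy1: "pd j (pd i u) x = pd i (pd j u) x" by (rule sym[OF su x])
    have sy2: "pd i (pd j (pd j u)) x = pd j (pd i (pd j u)) x" by (rule sym[OF s1 x])
    have sy3: "pd q (pd j u) x = pd j (pd q u) x" by (rule sym[OF su x])
    have sy4: "pd i (pd q (pd j u)) x = pd j (pd i (pd q u)) x"
    proof -
      have "pd i (pd q (pd j u)) x = pd i (pd j (pd q u)) x"
        by (rule pd_cong[OF op x]) (rule sym[OF su])
      also have "\<dots> = pd j (pd i (pd q u)) x" by (rule sym[OF s1 x])
      finally show ?thesis .
    qed
    have sy5: "pd j (pd q (pd j u)) x = pd j (pd j (pd q u)) x"
      by (rule pd_cong[OF op x]) (rule sym[OF su])
    have b: "(\<alpha> + unitv i - unitv j)$i = \<alpha>$i + 1" "(\<alpha> + unitv i - unitv j)$j = \<alpha>$j - 1"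
        "(\<alpha> + unitv i - unitv j)$q = \<alpha>$q"
      using ij iq jq by (simp_all add: unitv_def axis_def)
    have dn: "x$i - x$j \<noteq> 0" "x$i - x$q \<noteq> 0" "x$j - x$q \<noteq> 0" using nz[OF x] ij iq jq by auto
    have m1: "x$j - x$i = - (x$i - x$j)" "x$q - x$i = - (x$i - x$q)" "x$q - x$j = - (x$j - x$q)" by simp_all
    show "Mop (\<alpha> + unitv i - unitv j) i j (Lop \<alpha> i j u) x = 0"
      unfolding v_def[symmetric] Mop_def b Vij Vi[OF x] Vj[OF x] sy2 m1
      by (rule alg1[OF dn(1) E1[OF x] D1[unfolded sy1]])
    show "Mop (\<alpha> + unitv i - unitv j) i q (Lop \<alpha> i j u) x = 0"
      unfolding v_def[symmetric] Mop_def b Viq Vi[OF x] Vq[OF x] sy3 sy4 m1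
      by (rule alg2[OF dn(2) _ E2[OF x] E3[OF x] D2[unfolded sy1]]) simp
    show "Mop (\<alpha> + unitv i - unitv j) j q (Lop \<alpha> i j u) x = 0"
      unfolding v_def[symmetric] Mop_def b Vjq Vj[OF x] Vq[OF x] sy3 sy5 m1
      by (rule alg3[OF dn(3) E3[OF x] D3])
  qed
qed

end
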